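(* Consider the autonomous system $\ddot q^{a}=-\Gamma^{a}_{bc}(q)\dot q^{b}\dot q^{c}-Q^{a}(q)$ on a (pseudo-)Riemannian manifold with metric $\gamma_{ab}$. Let $m\ge 3$, let $\lambda\neq 0$ be a constant, and for $r=1,\dots,m-1$ let $L_{i_1\dots i_r}(q)$ be totally symmetric $r$-rank tensor fields such that $L_{(i_1\dots i_{m-1};i_m)}$ is an $m$th-order Killing tensor and \begin{align*} &L_{(i_1\dots i_{m-2};i_{m-1})}=-\tfrac{m}{\lambda}L_{(i_1\dots i_{m-1};i_m)}Q^{i_m}-\lambda L_{i_1\dots i_{m-1}},\\ &L_{(i_1\dots i_{r-1};i_r)}=(r+1)L_{i_1\dots i_r i_{r+1}}Q^{i_{r+1}}-\lambda L_{i_1\dots i_r},\quad r=2,\dots,m-2,\\ &\big(L_{c}Q^{c}\big)_{,i_1}=2\lambda L_{i_1i_2}Q^{i_2}-\lambda^{2}L_{i_1}. \end{align*} Then $$I^{(m)}_e=\frac{e^{\lambda t}}{\lambda}\Big(-L_{(i_1\dots i_{m-1};i_m)}\dot q^{i_1}\cdots\dot q^{i_m}+\lambda\sum_{r=1}^{m-1}L_{i_1\dots i_r}\dot q^{i_1}\cdots\dot q^{i_r}+L_{i_1}Q^{i_1}\Big)$$ is a first integral of the system.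
   Context: Indices are raised and lowered with $\gamma_{ab}$; Einstein summation convention; $\Gamma^a_{bc}$ are the Christoffel symbols of $\gamma_{ab}$; a comma denotes a partial derivative, a semicolon the Levi-Civita covariant derivative, round brackets around indices denote normalized total symmetrization. A totally symmetric tensor $K_{i_1\dots i_p}$ is a $p$th-order Killing tensor if $K_{(i_1\dots i_p;i_{p+1})}=0$. For $m=3$ the conditions with $r=2,\dots,m-2$ are vacuous. A first integral is a function of $(t,q,\dot q)$ constant along all solutions. *)

theory Defs
  imports "HOL-Analysis.Analysis" "HOL-Library.Multiset"
begin

text \<open>Everything is written in a local coordinate chart: an open set U of real^'n
 (coordinates q^1..q^n, indices of type 'n). Covariant tensor fields of rank r are
 functions  real^'n => 'n list => real  evaluated on index lists of length r.\<close>

definition pd :: "(real^'n \<Rightarrow> real) \<Rightarrow> 'n \<Rightarrow> real^'n \<Rightarrow> real" where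
  "pd f i x = frechet_derivative f (at x) (axis i 1)"

fun iter_pd :: "'n list \<Rightarrow> (real^'n \<Rightarrow> real) \<Rightarrow> real^'n \<Rightarrow> real" where
  "iter_pd [] f = f"
| "iter_pd (i # is) f = pd (iter_pd is f) i"

definition smooth_on :: "(real^'n) set \<Rightarrow> (real^'n \<Rightarrow> real) \<Rightarrow> bool" where
  "smooth_on U f \<longleftrightarrow> (\<forall>is. \<forall>x\<in>U. iter_pd is f differentiable (at x))"

definition metric_inv :: "(real^'n \<Rightarrow> 'n \<Rightarrow> 'n \<Rightarrow> real) \<Rightarrow> real^'n \<Rightarrow> 'n \<Rightarrow> 'n \<Rightarrow> real" where
  "metric_inv g x a b = matrix_inv (\<chi> i j. g x i j) $ a $ b"

definition christoffel :: "(real^'n \<Rightarrow> 'n \<Rightarrow> 'n \<Rightarrow> real) \<Rightarrow> real^'n \<Rightarrow> 'n \<Rightarrow> 'n \<Rightarrow> 'n \<Rightarrow> real" where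
  "christoffel g x a b c = (1/2) * (\<Sum>d\<in>UNIV. metric_inv g x a d *
      (pd (\<lambda>y. g y d b) c x + pd (\<lambda>y. g y d c) b x - pd (\<lambda>y. g y b c) d x))"

definition cov :: "(real^'n \<Rightarrow> 'n \<Rightarrow> 'n \<Rightarrow> real) \<Rightarrow> (real^'n \<Rightarrow> 'n list \<Rightarrow> real)
                   \<Rightarrow> real^'n \<Rightarrow> 'n list \<Rightarrow> 'n \<Rightarrow> real" where
  "cov g T x is j = pd (\<lambda>y. T y is) j x
     - (\<Sum>k<length is. \<Sum>d\<in>UNIV. christoffel g x d (is ! k) j * T x (is[k := d]))"

definition symz :: "('n list \<Rightarrow> real) \<Rightarrow> 'n list \<Rightarrow> real" where
  "symz T is = (1 / fact (length is)) *
     (\<Sum>\<sigma>\<in>{\<sigma>. \<sigma> permutes {..<length is}}. T (map (\<lambda>k. is ! \<sigma> k) [0..<length is]))"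

definition symcov :: "(real^'n \<Rightarrow> 'n \<Rightarrow> 'n \<Rightarrow> real) \<Rightarrow> (real^'n \<Rightarrow> 'n list \<Rightarrow> real)
                      \<Rightarrow> real^'n \<Rightarrow> 'n list \<Rightarrow> real" where
  "symcov g T x is = symz (\<lambda>js. cov g T x (butlast js) (last js)) is"

definition totally_symmetric :: "(real^'n) set \<Rightarrow> nat \<Rightarrow> (real^'n \<Rightarrow> 'n list \<Rightarrow> real) \<Rightarrow> bool" where
  "totally_symmetric U p K \<longleftrightarrow>
     (\<forall>x\<in>U. \<forall>is js. length is = p \<longrightarrow> mset js = mset is \<longrightarrow> K x js = K x is)"

definition killing_tensor :: "(real^'n \<Rightarrow> 'n \<Rightarrow> 'n \<Rightarrow> real) \<Rightarrow> (real^'n) set \<Rightarrow> nat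
                              \<Rightarrow> (real^'n \<Rightarrow> 'n list \<Rightarrow> real) \<Rightarrow> bool" where
  "killing_tensor g U p K \<longleftrightarrow> totally_symmetric U p K \<and>
     (\<forall>x\<in>U. \<forall>is. length is = p + 1 \<longrightarrow> symcov g K x is = 0)"

definition contr :: "nat \<Rightarrow> ('n::finite list \<Rightarrow> real) \<Rightarrow> real^'n \<Rightarrow> real" where
  "contr r T v = (\<Sum>is\<in>{is::'n list. length is = r}. T is * prod_list (map (\<lambda>i. v $ i) is))"

definition is_solution :: "(real^'n \<Rightarrow> 'n \<Rightarrow> 'n \<Rightarrow> real) \<Rightarrow> (real^'n \<Rightarrow> 'n \<Rightarrow> real) \<Rightarrow> (real^'n) set
      \<Rightarrow> real set \<Rightarrow> (real \<Rightarrow> real^'n) \<Rightarrow> (real \<Rightarrow> real^'n) \<Rightarrow> bool" where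
  "is_solution g Q U J q v \<longleftrightarrow>
     (\<forall>t\<in>J. q t \<in> U \<and> (q has_vector_derivative v t) (at t) \<and>
        (v has_vector_derivative
           (\<chi> a. - (\<Sum>b\<in>UNIV. \<Sum>c\<in>UNIV. christoffel g (q t) a b c * v t $ b * v t $ c) - Q (q t) a))
          (at t))"

end

theory Submission
  imports Defs
begin


lemma matrix_inv_entry:
  fixes A :: "real^'n^'n"
  assumes d: "det A \<noteq> 0"
  shows "matrix_inv A $ a $ b = det (\<chi> i j. if j = a then axis b 1 $ i else A$i$j) / det A"
proof -
  have inv: "invertible A" using d invertible_det_nz by blast
  have AB: "A ** matrix_inv A = mat 1"
    using inv unfolding invertible_def matrix_inv_def by (metis (mono_tags, lifting) someI_ex)
  define x where "x = (\<chi> k. matrix_inv A $ k $ b)"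
  have "A *v x = axis b 1"
  proof -
    have "A *v x = (A ** matrix_inv A) *v axis b 1"
      by (simp add: x_def vec_eq_iff matrix_vector_mult_def matrix_matrix_mult_def axis_def sum_distrib_left
          if_distrib cong: if_cong)
    then show ?thesis by (simp add: AB)
  qed
  then have "x = (\<chi> k. det(\<chi> i j. if j=k then axis b 1 $i else A$i$j) / det A)"
    using cramer[OF d] by blast
  then have "x $ a = det(\<chi> i j. if j=a then axis b 1 $i else A$i$j) / det A" by simp
  then show ?thesis by (simp add: x_def)
qed



lemma differentiable_prod':
  fixes f :: "'i \<Rightarrow> 'a::real_normed_vector \<Rightarrow> real"
  assumes "\<And>i. i \<in> I \<Longrightarrow> f i differentiable (at x)"
  shows "(\<lambda>y. \<Prod>i\<in>I. f i y) differentiable (at x)"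
proof -
  from assms obtain f' where "\<And>i. i \<in> I \<Longrightarrow> (f i has_derivative f' i) (at x)"
    unfolding differentiable_def by metis
  then show ?thesis unfolding differentiable_def by (blast intro: has_derivative_prod)
qed

lemma det_differentiable:
  fixes F :: "'a::real_normed_vector \<Rightarrow> 'n::finite \<Rightarrow> 'n \<Rightarrow> real"
  assumes "\<And>i j. (\<lambda>y. F y i j) differentiable (at x)"
  shows "(\<lambda>y. det (\<chi> i j. F y i j)) differentiable (at x)"
  unfolding det_def
  by (auto intro!: differentiable_sum differentiable_mult differentiable_prod' assms)

lemma smooth_diff: "smooth_on U f \<Longrightarrow> x \<in> U \<Longrightarrow> f differentiable (at x)"
  unfolding smooth_on_def by (metis iter_pd.simps(1))

lemma smooth_pd_diff: "smooth_on U f \<Longrightarrow> x \<in> U \<Longrightarrow> pd f j differentiable (at x)"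
  unfolding smooth_on_def by (metis iter_pd.simps)

lemma metric_inv_diff:
  fixes g :: "real^'n \<Rightarrow> 'n \<Rightarrow> 'n \<Rightarrow> real"
  assumes U: "open U" and gs: "\<And>i j. smooth_on U (\<lambda>x. g x i j)"
    and nd: "\<And>x. x \<in> U \<Longrightarrow> det (\<chi> i j. g x i j) \<noteq> 0" and x: "x \<in> U"
  shows "(\<lambda>y. metric_inv g y a b) differentiable (at x)"
proof -
  let ?f = "\<lambda>y. det (\<chi> i j. if j = a then axis b 1 $ i else g y i j) / det (\<chi> i j. g y i j)"
  have gd: "\<And>i j. (\<lambda>y. g y i j) differentiable (at x)" using gs x smooth_diff by blast
  have "?f differentiable (at x)"
    apply (rule differentiable_divide)
    apply (rule det_differentiable[where F = "\<lambda>y i j. if j = a then axis b 1 $ i else g y i j"])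
    using gd apply (case_tac "j = a") apply simp apply simp
    apply (rule det_differentiable) using gd apply simp
    using nd x by simp
  then obtain f' where "(?f has_derivative f') (at x)" unfolding differentiable_def by blast
  then have "((\<lambda>y. metric_inv g y a b) has_derivative f') (at x)"
    apply (rule has_derivative_transform_within_open[OF _ U x])
    using nd apply (simp add: metric_inv_def matrix_inv_entry)
    apply (rule arg_cong[where f=det]) by (simp add: vec_eq_iff)
  then show ?thesis unfolding differentiable_def by blast
qed

lemma christoffel_diff:
  fixes g :: "real^'n \<Rightarrow> 'n \<Rightarrow> 'n \<Rightarrow> real"
  assumes U: "open U" and gs: "\<And>i j. smooth_on U (\<lambda>x. g x i j)"
    and nd: "\<And>x. x \<in> U \<Longrightarrow> det (\<chi> i j. g x i j) \<noteq> 0" and x: "x \<in> U"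
  shows "(\<lambda>y. christoffel g y a b c) differentiable (at x)"
  unfolding christoffel_def
  by (intro differentiable_mult differentiable_const differentiable_sum ballI finite
      metric_inv_diff[OF U gs nd x] differentiable_add differentiable_diff smooth_pd_diff[OF gs x])

lemma cov_diff:
  fixes g :: "real^'n \<Rightarrow> 'n \<Rightarrow> 'n \<Rightarrow> real"
  assumes U: "open U" and gs: "\<And>i j. smooth_on U (\<lambda>x. g x i j)"
    and nd: "\<And>x. x \<in> U \<Longrightarrow> det (\<chi> i j. g x i j) \<noteq> 0" and x: "x \<in> U"
    and Ts: "\<And>is. smooth_on U (\<lambda>y. T y is)"
  shows "(\<lambda>y. cov g T y is j) differentiable (at x)"
  unfolding cov_def
  by (intro differentiable_mult differentiable_const differentiable_sum ballI finite
      christoffel_diff[OF U gs nd x] differentiable_diff smooth_pd_diff[OF Ts x] smooth_diff[OF Ts x]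
      finite_lessThan)

lemma symz_diff:
  assumes "\<And>js. (\<lambda>y. G y js) differentiable (at x)"
  shows "(\<lambda>y. symz (G y) is) differentiable (at x)"
  unfolding symz_def
  by (intro differentiable_mult differentiable_const differentiable_sum ballI finite_permutations
      finite_lessThan assms)

lemma symcov_diff:
  fixes g :: "real^'n \<Rightarrow> 'n \<Rightarrow> 'n \<Rightarrow> real"
  assumes U: "open U" and gs: "\<And>i j. smooth_on U (\<lambda>x. g x i j)"
    and nd: "\<And>x. x \<in> U \<Longrightarrow> det (\<chi> i j. g x i j) \<noteq> 0" and x: "x \<in> U"
    and Ts: "\<And>is. smooth_on U (\<lambda>y. T y is)"
  shows "(\<lambda>y. symcov g T y is) differentiable (at x)"
  unfolding symcov_def
  by (rule symz_diff, rule cov_diff[OF U gs nd x Ts])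



lemma chain_real:
  fixes f :: "real^'n \<Rightarrow> real"
  assumes f: "f differentiable (at (q t))" and q: "(q has_vector_derivative w) (at t)"
  shows "((\<lambda>\<tau>. f (q \<tau>)) has_real_derivative (\<Sum>j\<in>UNIV. w $ j * pd f j (q t))) (at t)"
proof -
  let ?f' = "frechet_derivative f (at (q t))"
  have fd: "(f has_derivative ?f') (at (q t))" using f frechet_derivative_works by blast
  have lin: "linear ?f'" using fd has_derivative_linear by blast
  have qd: "(q has_derivative (\<lambda>h. h *\<^sub>R w)) (at t)" using q has_vector_derivative_def by blast
  have "((\<lambda>\<tau>. f (q \<tau>)) has_derivative (\<lambda>h. ?f' (h *\<^sub>R w))) (at t)"
    using has_derivative_compose[OF qd fd] by (simp add: o_def)
  moreover have "\<And>h. ?f' (h *\<^sub>R w) = h * ?f' w" using lin by (simp add: linear_scale)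
  ultimately have "((\<lambda>\<tau>. f (q \<tau>)) has_derivative (\<lambda>h. h * ?f' w)) (at t)"
    by simp
  then have "((\<lambda>\<tau>. f (q \<tau>)) has_real_derivative ?f' w) (at t)"
    unfolding has_field_derivative_def by (simp add: mult.commute[of _ "?f' w"])
  moreover have "?f' w = (\<Sum>j\<in>UNIV. w $ j * pd f j (q t))"
  proof -
    have "?f' w = ?f' (\<Sum>j\<in>UNIV. w $ j *\<^sub>R axis j 1)"
      using basis_expansion[of w] by (simp add: scalar_mult_eq_scaleR)
    also have "\<dots> = (\<Sum>j\<in>UNIV. w $ j * ?f' (axis j 1))"
      using lin by (simp add: linear_sum linear_scale)
    finally show ?thesis by (simp add: pd_def)
  qed
  ultimately show ?thesis by simp
qed

lemma comp_deriv:
  assumes "(v has_vector_derivative a) (at t)"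
  shows "((\<lambda>\<tau>. v \<tau> $ i) has_real_derivative a $ i) (at t)"
  using bounded_linear.has_vector_derivative[OF bounded_linear_vec_nth assms]
  by (simp add: has_real_derivative_iff_has_vector_derivative)

definition P :: "real^'n \<Rightarrow> 'n list \<Rightarrow> real" where
  "P w is = prod_list (map (\<lambda>i. w $ i) is)"

definition del :: "nat \<Rightarrow> 'a list \<Rightarrow> 'a list" where
  "del k xs = take k xs @ drop (Suc k) xs"

definition ins :: "nat \<Rightarrow> 'a \<Rightarrow> 'a list \<Rightarrow> 'a list" where
  "ins k c xs = take k xs @ c # drop k xs"

definition DP :: "real^'n \<Rightarrow> real^'n \<Rightarrow> 'n list \<Rightarrow> real" where
  "DP w a is = (\<Sum>k<length is. a $ (is ! k) * P w (del k is))"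

lemma P_simps[simp]: "P w [] = 1" "P w (i # is) = w $ i * P w is"
  by (simp_all add: P_def)

lemma P_append: "P w (xs @ ys) = P w xs * P w ys"
  by (simp add: P_def)

lemma del_Cons_Suc[simp]: "del (Suc k) (i # is) = i # del k is"
  by (simp add: del_def)
lemma del_Cons_0[simp]: "del 0 (i # is) = is"
  by (simp add: del_def)

lemma DP_Cons: "DP w a (i # is) = a $ i * P w is + w $ i * DP w a is"
  unfolding DP_def apply (simp only: length_Cons sum.lessThan_Suc_shift)
  by (simp add: sum_distrib_left mult.left_commute)

lemma deriv_P:
  assumes "(v has_vector_derivative a) (at t)"
  shows "((\<lambda>\<tau>. P (v \<tau>) is) has_real_derivative DP (v t) a is) (at t)"
proof (induction "is")
  case Nil
  then show ?case by (simp add: DP_def)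
next
  case (Cons i "is")
  have "((\<lambda>\<tau>. v \<tau> $ i * P (v \<tau>) is) has_real_derivative
          a $ i * P (v t) is + v t $ i * DP (v t) a is) (at t)"
    by (rule DERIV_cong[OF DERIV_mult[OF comp_deriv[OF assms] Cons]]) (simp add: mult.commute)
  then show ?case by (simp add: DP_Cons)
qed

lemma finite_len: "finite {is::'n::finite list. length is = r}"
  using finite_lists_length_eq[of "UNIV::'n set" r] by simp

lemma deriv_contr:
  fixes T :: "real^'n \<Rightarrow> 'n list \<Rightarrow> real"
  assumes q: "(q has_vector_derivative v t) (at t)" and v: "(v has_vector_derivative a) (at t)"
    and Td: "\<And>is. length is = r \<Longrightarrow> (\<lambda>y. T y is) differentiable (at (q t))"
  shows "((\<lambda>\<tau>. contr r (T (q \<tau>)) (v \<tau>)) has_real_derivative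
     (\<Sum>is\<in>{is. length is = r}. (\<Sum>j\<in>UNIV. v t $ j * pd (\<lambda>y. T y is) j (q t)) * P (v t) is
        + T (q t) is * DP (v t) a is)) (at t)"
  unfolding contr_def P_def[symmetric]
  apply (rule DERIV_sum)
  apply (rule DERIV_mult[OF chain_real[OF Td q] deriv_P[OF v], THEN DERIV_cong])
  by auto



lemma ins_len[simp]: "k \<le> length xs \<Longrightarrow> length (ins k c xs) = Suc (length xs)"
  by (simp add: ins_def)
lemma del_ins[simp]: "k \<le> length xs \<Longrightarrow> del k (ins k c xs) = xs"
  by (simp add: ins_def del_def)
lemma ins_nth[simp]: "k \<le> length xs \<Longrightarrow> ins k c xs ! k = c"
  by (simp add: ins_def nth_append)
lemma ins_del: "k < length ys \<Longrightarrow> ins k (ys ! k) (del k ys) = ys"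
  by (simp add: ins_def del_def min_def id_take_nth_drop[symmetric])
lemma del_len[simp]: "k < length ys \<Longrightarrow> length (del k ys) = length ys - 1"
  by (simp add: del_def)
lemma ins_upd[simp]: "k \<le> length xs \<Longrightarrow> (ins k c xs)[k := d] = ins k d xs"
  by (simp add: ins_def list_update_append)
lemma ins_mset: "mset (ins k c xs) = mset (xs @ [c])"
proof -
  have e: "mset (take k xs) + mset (drop k xs) = mset xs"
    by (metis append_take_drop_id mset_append)
  show ?thesis by (simp add: ins_def e flip: e)
qed
lemma P_ins: "P w (ins k c xs) = w $ c * P w xs"
proof -
  have "P w (ins k c xs) = P w (take k xs) * (w $ c * P w (drop k xs))"
    by (simp add: ins_def P_append)
  also have "\<dots> = w $ c * P w (take k xs @ drop k xs)" by (simp only: P_append) simp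
  finally show ?thesis by simp
qed
lemma ins_end: "length xs = k \<Longrightarrow> ins k c xs = xs @ [c]"
  by (simp add: ins_def)

lemma sum_ins:
  fixes f :: "'n::finite list \<Rightarrow> 'a::comm_monoid_add"
  assumes k: "k \<le> r"
  shows "(\<Sum>is\<in>{is. length is = Suc r}. f is) = (\<Sum>is\<in>{is. length is = r}. \<Sum>c\<in>UNIV. f (ins k c is))"
proof -
  have "(\<Sum>is\<in>{is. length is = r}. \<Sum>c\<in>UNIV. f (ins k c is)) =
        (\<Sum>p\<in>{is. length is = r} \<times> UNIV. f (ins k (snd p) (fst p)))"
    by (simp add: sum.cartesian_product split_beta)
  also have "\<dots> = (\<Sum>is\<in>{is. length is = Suc r}. f is)"
    apply (rule sum.reindex_bij_witness[where i = "\<lambda>is. (del k is, is ! k)" and j = "\<lambda>p. ins k (snd p) (fst p)"])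
    using k by (auto simp: ins_del)
  finally show ?thesis by simp
qed

lemma contr_P: "contr r T w = (\<Sum>is\<in>{is. length is = r}. T is * P w is)"
  by (simp add: contr_def P_def)

lemma contr_Suc: "contr (Suc r) F w = (\<Sum>is\<in>{is. length is = r}. \<Sum>j\<in>UNIV. F (is @ [j]) * (P w is * w $ j))"
  unfolding contr_P
  by (subst sum_ins[where k=r]) (auto intro!: sum.cong simp: ins_end P_append)



lemma triple_swap:
  fixes F :: "'a \<Rightarrow> 'a \<Rightarrow> 'a \<Rightarrow> real"
  assumes "finite (A::'a set)"
  shows "(\<Sum>c\<in>A. \<Sum>b\<in>A. \<Sum>d\<in>A. F c b d) = (\<Sum>b\<in>A. \<Sum>j\<in>A. \<Sum>d\<in>A. F d b j)"
proof -
  have "(\<Sum>b\<in>A. \<Sum>j\<in>A. \<Sum>d\<in>A. F d b j) = (\<Sum>b\<in>A. \<Sum>d\<in>A. \<Sum>j\<in>A. F d b j)"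
    by (rule sum.cong[OF refl], rule sum.swap)
  also have "\<dots> = (\<Sum>d\<in>A. \<Sum>b\<in>A. \<Sum>j\<in>A. F d b j)" by (rule sum.swap)
  finally show ?thesis by simp
qed

lemma inner_id:
  fixes G :: "'n::finite \<Rightarrow> 'n \<Rightarrow> 'n \<Rightarrow> real" and T Q :: "'n \<Rightarrow> real"
  shows "(\<Sum>c\<in>UNIV. T c * ((\<chi> b. - (\<Sum>c\<in>UNIV. \<Sum>d\<in>UNIV. G b c d * w $ c * w $ d) - Q b) $ c * p)) =
     - (\<Sum>b\<in>UNIV. \<Sum>j\<in>UNIV. (\<Sum>d\<in>UNIV. G d b j * T d) * (w $ b * p * w $ j)) - (\<Sum>c\<in>UNIV. T c * Q c * p)"
proof -
  have "(\<Sum>c\<in>UNIV. T c * ((\<chi> b. - (\<Sum>c\<in>UNIV. \<Sum>d\<in>UNIV. G b c d * w $ c * w $ d) - Q b) $ c * p)) =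
      - (\<Sum>c\<in>UNIV. \<Sum>b\<in>UNIV. \<Sum>d\<in>UNIV. T c * G c b d * w $ b * w $ d * p) - (\<Sum>c\<in>UNIV. T c * Q c * p)"
    by (simp add: algebra_simps sum_distrib_left sum_distrib_right sum_subtractf sum_negf)
  also have "(\<Sum>c\<in>UNIV. \<Sum>b\<in>UNIV. \<Sum>d\<in>UNIV. T c * G c b d * w $ b * w $ d * p) =
     (\<Sum>b\<in>UNIV. \<Sum>j\<in>UNIV. \<Sum>d\<in>UNIV. T d * G d b j * w $ b * w $ j * p)"
    by (rule triple_swap) simp
  also have "\<dots> = (\<Sum>b\<in>UNIV. \<Sum>j\<in>UNIV. (\<Sum>d\<in>UNIV. G d b j * T d) * (w $ b * p * w $ j))"
    by (auto intro!: sum.cong simp: sum_distrib_left sum_distrib_right mult_ac)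
  finally show ?thesis .
qed

lemma cov_identity:
  fixes T :: "real^'n \<Rightarrow> 'n list \<Rightarrow> real" and g :: "real^'n \<Rightarrow> 'n \<Rightarrow> 'n \<Rightarrow> real"
    and x w :: "real^'n" and Q :: "real^'n \<Rightarrow> 'n \<Rightarrow> real"
  defines "a \<equiv> (\<chi> b. - (\<Sum>c\<in>UNIV. \<Sum>d\<in>UNIV. christoffel g x b c d * w $ c * w $ d) - Q x b)"
  shows "(\<Sum>is\<in>{is. length is = Suc r}. (\<Sum>j\<in>UNIV. w $ j * pd (\<lambda>y. T y is) j x) * P w is + T x is * DP w a is)
   = contr (Suc (Suc r)) (\<lambda>js. cov g T x (butlast js) (last js)) w
     - (\<Sum>k<Suc r. \<Sum>is\<in>{is. length is = r}. \<Sum>c\<in>UNIV. T x (ins k c is) * Q x c * P w is)"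
proof -
  let ?G = "christoffel g x"
  let ?L = "{is::'n list. length is = Suc r}"
  let ?L' = "{is::'n list. length is = r}"
  define X1 where "X1 = (\<Sum>is\<in>?L. \<Sum>j\<in>UNIV. pd (\<lambda>y. T y is) j x * (P w is * w $ j))"
  define X2 where "X2 k = (\<Sum>is\<in>?L. \<Sum>j\<in>UNIV. (\<Sum>d\<in>UNIV. ?G d (is ! k) j * T x (is[k := d])) * (P w is * w $ j))" for k
  define Y where "Y k = (\<Sum>is\<in>?L. T x is * (a $ (is ! k) * P w (del k is)))" for k
  define Qk where "Qk k = (\<Sum>is\<in>?L'. \<Sum>c\<in>UNIV. T x (ins k c is) * Q x c * P w is)" for k
  have lhs: "(\<Sum>is\<in>?L. (\<Sum>j\<in>UNIV. w $ j * pd (\<lambda>y. T y is) j x) * P w is + T x is * DP w a is)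
      = X1 + (\<Sum>k<Suc r. Y k)"
    unfolding X1_def Y_def DP_def sum.distrib
    apply (subst sum.swap[where A="{..<Suc r}"])
    by (auto intro!: sum.cong simp: sum_distrib_left sum_distrib_right algebra_simps)
  have rhs: "contr (Suc (Suc r)) (\<lambda>js. cov g T x (butlast js) (last js)) w = X1 - (\<Sum>k<Suc r. X2 k)"
    unfolding contr_Suc X1_def X2_def cov_def
    apply (subst sum.swap[where A="{..<Suc r}"])
    apply (subst sum_subtractf[symmetric])
    apply (rule sum.cong[OF refl])
    apply (subst sum.swap[where A="{..<Suc r}"])
    apply (subst sum_subtractf[symmetric])
    apply (rule sum.cong[OF refl])
    by (simp add: algebra_simps sum_distrib_left sum_distrib_right)
  have key: "Y k = - X2 k - Qk k" if k: "k < Suc r" for k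
  proof -
    have kr: "k \<le> r" using k by simp
    have y: "Y k = (\<Sum>is\<in>?L'. \<Sum>c\<in>UNIV. T x (ins k c is) * (a $ c * P w is))"
      unfolding Y_def by (subst sum_ins[OF kr]) (use kr in \<open>auto intro!: sum.cong\<close>)
    have x2: "X2 k = (\<Sum>is\<in>?L'. \<Sum>b\<in>UNIV. \<Sum>j\<in>UNIV. (\<Sum>d\<in>UNIV. ?G d b j * T x (ins k d is)) * (w $ b * P w is * w $ j))"
      unfolding X2_def by (subst sum_ins[OF kr]) (use kr in \<open>auto intro!: sum.cong simp: P_ins\<close>)
    show ?thesis
      unfolding y x2 Qk_def a_def inner_id
      by (simp add: sum_subtractf sum_negf)
  qed
  have "(\<Sum>k<Suc r. Y k) = - (\<Sum>k<Suc r. X2 k) - (\<Sum>k<Suc r. Qk k)"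
    using key by (simp add: sum_subtractf sum_negf)
  then show ?thesis using lhs rhs unfolding Qk_def by simp
qed



lemma P_mset: "mset xs = mset ys \<Longrightarrow> P w xs = P w ys"
  unfolding P_def by (metis mset_map prod_mset_prod_list)

lemma perm_sum:
  fixes f :: "'n::finite list \<Rightarrow> real"
  assumes s: "s permutes {..<p}"
  shows "(\<Sum>is\<in>{is. length is = p}. f (permute_list s is)) = (\<Sum>is\<in>{is. length is = p}. f is)"
proof (rule sum.reindex_bij_witness[where i = "permute_list (inv s)" and j = "permute_list s"])
  have si: "inv s permutes {..<p}" using s permutes_inv by blast
  fix a :: "'n list" assume "a \<in> {is. length is = p}"
  then have l: "length a = p" by simp
  show "permute_list (inv s) (permute_list s a) = a"
    using permute_list_compose[of "inv s" a s] si l permutes_inv_o(1)[OF s] by simp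
  show "permute_list s a \<in> {is. length is = p}" using l by simp
  show "permute_list s (permute_list (inv s) a) = a"
    using permute_list_compose[of s a "inv s"] s l permutes_inv_o(2)[OF s] by simp
  show "permute_list (inv s) a \<in> {is. length is = p}" using l by simp
  show "f (permute_list s a) = f (permute_list s a)" ..
qed

lemma contr_symz: "contr p (symz F) w = contr p F w"
proof -
  let ?L = "{is::'n list. length is = p}"
  let ?S = "{s. s permutes {..<p}}"
  have "contr p (symz F) w = (\<Sum>is\<in>?L. (1 / fact p) * (\<Sum>s\<in>?S. F (permute_list s is)) * P w is)"
    unfolding contr_P symz_def permute_list_def by (auto intro!: sum.cong)
  also have "\<dots> = (1 / fact p) * (\<Sum>s\<in>?S. \<Sum>is\<in>?L. F (permute_list s is) * P w (permute_list s is))"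
    apply (subst sum.swap)
    apply (simp add: sum_distrib_left sum_distrib_right mult_ac)
    apply (rule sum.cong[OF refl])+
    apply (subst P_mset[of "permute_list _ _" "_"])
    by auto
  also have "\<dots> = (1 / fact p) * (\<Sum>s\<in>?S. contr p F w)"
  proof -
    have "\<And>s. s \<in> ?S \<Longrightarrow> (\<Sum>is\<in>?L. F (permute_list s is) * P w (permute_list s is)) = contr p F w"
      using perm_sum[where f="\<lambda>is. F is * P w is"] by (simp add: contr_P)
    then show ?thesis by simp
  qed
  also have "\<dots> = contr p F w"
    by (simp add: card_permutations)
  finally show ?thesis .
qed

lemma Qterm_sym:
  assumes sym: "\<And>is js. length is = Suc r \<Longrightarrow> mset js = mset is \<Longrightarrow> T js = T is"
  shows "(\<Sum>k<Suc r. \<Sum>is\<in>{is. length is = r}. \<Sum>c\<in>UNIV. T (ins k c is) * Q c * P w is)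
     = real (Suc r) * contr r (\<lambda>is. \<Sum>c\<in>UNIV. T (is @ [c]) * Q c) w"
proof -
  have "\<And>k is c. k < Suc r \<Longrightarrow> length is = r \<Longrightarrow> T (ins k c is) = T (is @ [c])"
    using sym ins_mset by (metis length_append_singleton)
  then have "(\<Sum>k<Suc r. \<Sum>is\<in>{is. length is = r}. \<Sum>c\<in>UNIV. T (ins k c is) * Q c * P w is)
     = (\<Sum>k<Suc r. \<Sum>is\<in>{is. length is = r}. \<Sum>c\<in>UNIV. T (is @ [c]) * Q c * P w is)"
    by (auto intro!: sum.cong)
  also have "\<dots> = real (Suc r) * contr r (\<lambda>is. \<Sum>c\<in>UNIV. T (is @ [c]) * Q c) w"
    by (simp add: contr_P sum_distrib_right)
  finally show ?thesis .
qed



lemma aux1: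
  assumes h1: "lam*(a::real) = lam*b - lam^2*c" and h2: "s = x - lam*y"
  shows "lam*(a+s) = lam*(b+x) - lam^2*(c+y)"
proof -
  have "lam*(a+s) = (lam*b - lam^2*c) + lam*(x - lam*y)" using h1 h2 by (simp add: distrib_left)
  then show ?thesis by (simp add: algebra_simps power2_eq_square)
qed

lemma aux2:
  fixes M :: real
  assumes h1: "lam * sS = lam * sLQ - lam^2 * sC" and h2: "lam * S1 = -M * KQ - lam^2 * C2"
    and h3: "Bd = 2 * lam * LQ2 - lam^2 * C1" and h4: "LQ1 = B"
  shows "lam * (-S2 + lam * (C1 + sC + C2) + B) + (-(0 - M * KQ) + lam * ((sS + S1 + S2) - (LQ1 + 2 * LQ2 + sLQ)) + Bd) = 0"
proof -
  have "lam * (-S2 + lam * (C1 + sC + C2) + B) + (-(0 - M * KQ) + lam * ((sS + S1 + S2) - (LQ1 + 2 * LQ2 + sLQ)) + Bd)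
    = lam^2 * (C1 + sC + C2) + lam * B + M * KQ + lam * sS + lam * S1 - lam * LQ1 - 2 * lam * LQ2 - lam * sLQ + Bd"
    by (simp add: algebra_simps power2_eq_square)
  also have "\<dots> = 0" unfolding h1 h2 h3 h4 by (simp add: algebra_simps power2_eq_square)
  finally show ?thesis .
qed

lemma telescope:
  fixes S C LQ :: "nat \<Rightarrow> real"
  assumes mid: "\<And>r. 2 \<le> r \<Longrightarrow> r \<le> M - 2 \<Longrightarrow> S (r - 1) = real (r + 1) * LQ (r + 1) - lam * C r"
  shows "N + 3 \<le> M \<Longrightarrow> lam * (\<Sum>r=1..N. S r) = lam * (\<Sum>r=3..N+2. real r * LQ r) - lam^2 * (\<Sum>r=2..N+1. C r)"
proof (induction N)
  case 0
  then show ?case by simp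
next
  case (Suc N)
  have IH: "lam * (\<Sum>r=1..N. S r) = lam * (\<Sum>r=3..N+2. real r * LQ r) - lam^2 * (\<Sum>r=2..N+1. C r)"
    using Suc by simp
  have m: "S (N+2-1) = real (N+2+1) * LQ (N+2+1) - lam * C (N+2)"
    by (rule mid) (use Suc.prems in auto)
  have s1: "(\<Sum>r=1..Suc N. S r) = (\<Sum>r=1..N. S r) + S (N+1)" by simp
  have s2: "(\<Sum>r=3..Suc N+2. real r * LQ r) = (\<Sum>r=3..N+2. real r * LQ r) + real (N+2+1) * LQ (N+2+1)"
    by simp
  have s3: "(\<Sum>r=2..Suc N+1. C r) = (\<Sum>r=2..N+1. C r) + C (N+2)"
    by (simp add: add.commute)
  have m': "S (N+1) = real (N+2+1) * LQ (N+2+1) - lam * C (N+2)" using m by simp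
  show ?case unfolding s1 s2 s3 by (rule aux1[OF IH m'])
qed

lemma final_algebra:
  fixes S C LQ :: "nat \<Rightarrow> real"
  assumes M: "M = N + 3" and lam: "lam \<noteq> 0"
    and top: "S (M - 2) = - (real M / lam) * KQ - lam * C (M - 1)"
    and mid: "\<And>r. 2 \<le> r \<Longrightarrow> r \<le> M - 2 \<Longrightarrow> S (r - 1) = real (r + 1) * LQ (r + 1) - lam * C r"
    and bot: "Bd = 2 * lam * LQ 2 - lam^2 * C 1"
    and lq1: "LQ 1 = B"
  shows "lam * (- S (M - 1) + lam * (\<Sum>r=1..M-1. C r) + B)
     + (- (0 - real M * KQ) + lam * (\<Sum>r=1..M-1. S r - real r * LQ r) + Bd) = 0"
proof -
  have tel: "lam * (\<Sum>r=1..N. S r) = lam * (\<Sum>r=3..N+2. real r * LQ r) - lam^2 * (\<Sum>r=2..N+1. C r)"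
    by (rule telescope[where M=M and N=N and S=S and LQ=LQ and C=C and lam=lam, OF mid]) (use M in simp_all)
  have e1: "(\<Sum>r=1..M-1. S r) = (\<Sum>r=1..N. S r) + S (N+1) + S (N+2)"
    using M by (simp add: numeral_3_eq_3)
  have e2: "(\<Sum>r=1..M-1. real r * LQ r) = LQ 1 + 2 * LQ 2 + (\<Sum>r=3..N+2. real r * LQ r)"
  proof -
    have "(\<Sum>r=1..N+2. real r * LQ r) = LQ 1 + (\<Sum>r=2..N+2. real r * LQ r)"
      by (subst sum.atLeast_Suc_atMost) (simp_all add: numeral_2_eq_2)
    also have "(\<Sum>r=2..N+2. real r * LQ r) = 2 * LQ 2 + (\<Sum>r=3..N+2. real r * LQ r)"
      by (subst sum.atLeast_Suc_atMost) (simp_all add: numeral_3_eq_3 numeral_2_eq_2)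
    finally show ?thesis using M by simp
  qed
  have e3: "(\<Sum>r=1..M-1. C r) = C 1 + (\<Sum>r=2..N+1. C r) + C (N+2)"
  proof -
    have "(\<Sum>r=1..N+2. C r) = C 1 + (\<Sum>r=2..N+2. C r)"
      by (subst sum.atLeast_Suc_atMost) (simp_all add: numeral_2_eq_2)
    also have "(\<Sum>r=2..N+2. C r) = (\<Sum>r=2..N+1. C r) + C (N+2)"
      by (simp add: add.commute)
    finally show ?thesis using M by simp
  qed
  have top': "lam * S (N+1) = - real M * KQ - lam^2 * C (N+2)"
    using top M lam by (simp add: field_simps power2_eq_square numeral_3_eq_3)
  have mm: "M - 1 = N + 2" using M by simp
  show ?thesis
    apply (unfold sum_subtractf e1 e2 e3)
    apply (unfold mm)
    by (rule aux2[OF tel top' bot lq1])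
qed



lemma field_deriv:
  fixes T :: "real^'n \<Rightarrow> 'n list \<Rightarrow> real" and g :: "real^'n \<Rightarrow> 'n \<Rightarrow> 'n \<Rightarrow> real"
    and Q :: "real^'n \<Rightarrow> 'n \<Rightarrow> real"
  assumes q: "(q has_vector_derivative v t) (at t)"
    and vd: "(v has_vector_derivative (\<chi> a. - (\<Sum>b\<in>UNIV. \<Sum>c\<in>UNIV. christoffel g (q t) a b c * v t $ b * v t $ c) - Q (q t) a)) (at t)"
    and Td: "\<And>is. length is = Suc r \<Longrightarrow> (\<lambda>y. T y is) differentiable (at (q t))"
    and sym: "\<And>is js. length is = Suc r \<Longrightarrow> mset js = mset is \<Longrightarrow> T (q t) js = T (q t) is"
  shows "((\<lambda>\<tau>. contr (Suc r) (T (q \<tau>)) (v \<tau>)) has_real_derivative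
      contr (Suc (Suc r)) (symcov g T (q t)) (v t)
        - real (Suc r) * contr r (\<lambda>is. \<Sum>c\<in>UNIV. T (q t) (is @ [c]) * Q (q t) c) (v t)) (at t)"
proof -
  have sc: "symcov g T (q t) = symz (\<lambda>js. cov g T (q t) (butlast js) (last js))"
    by (rule ext) (simp add: symcov_def)
  show ?thesis
    apply (rule DERIV_cong[OF deriv_contr[OF q vd Td]])
     apply assumption
    apply (subst cov_identity)
    apply (subst Qterm_sym[where T = "T (q t)"])
    using sym apply blast
    by (simp add: sc contr_symz)
qed

lemma contr_lin:
  assumes "\<And>is. length is = n \<Longrightarrow> F is = \<alpha> * G is + \<beta> * H is"
  shows "contr n F w = \<alpha> * contr n G w + \<beta> * contr n H w"
  unfolding contr_P using assms
  by (simp add: sum_distrib_left sum.distrib[symmetric] algebra_simps)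

lemma contr_zero_fun:
  assumes "\<And>is. length is = n \<Longrightarrow> F is = 0"
  shows "contr n F w = 0"
  unfolding contr_P using assms by simp

lemma contr_0: "contr 0 F w = F []"
  unfolding contr_P by simp

lemma contr_1: "contr (Suc 0) F w = (\<Sum>j\<in>UNIV. F [j] * w $ j)"
  unfolding contr_Suc by simp



theorem theorem1:
  fixes g :: "real^'n \<Rightarrow> 'n \<Rightarrow> 'n \<Rightarrow> real"
    and Q :: "real^'n \<Rightarrow> 'n \<Rightarrow> real"
    and L :: "nat \<Rightarrow> real^'n \<Rightarrow> 'n list \<Rightarrow> real"
    and U :: "(real^'n) set" and m :: nat and lam :: real
  assumes U_open: "open U"
    and g_smooth: "\<And>i j. smooth_on U (\<lambda>x. g x i j)"
    and g_sym: "\<And>x i j. x \<in> U \<Longrightarrow> g x i j = g x j i"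
    and g_nondeg: "\<And>x. x \<in> U \<Longrightarrow> det (\<chi> i j. g x i j) \<noteq> 0"
    and Q_smooth: "\<And>a. smooth_on U (\<lambda>x. Q x a)"
    and m3: "m \<ge> 3" and lam: "lam \<noteq> 0"
    and L_smooth: "\<And>r is. 1 \<le> r \<Longrightarrow> r \<le> m - 1 \<Longrightarrow> smooth_on U (\<lambda>x. L r x is)"
    and L_sym: "\<And>r. 1 \<le> r \<Longrightarrow> r \<le> m - 1 \<Longrightarrow> totally_symmetric U r (L r)"
    and killing: "killing_tensor g U m (symcov g (L (m - 1)))"
    and eq_top: "\<And>x is. x \<in> U \<Longrightarrow> length is = m - 1 \<Longrightarrow>
        symcov g (L (m - 2)) x is =
          - (real m / lam) * (\<Sum>c\<in>UNIV. symcov g (L (m - 1)) x (is @ [c]) * Q x c)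
          - lam * L (m - 1) x is"
    and eq_mid: "\<And>r x is. 2 \<le> r \<Longrightarrow> r \<le> m - 2 \<Longrightarrow> x \<in> U \<Longrightarrow> length is = r \<Longrightarrow>
        symcov g (L (r - 1)) x is =
          real (r + 1) * (\<Sum>c\<in>UNIV. L (r + 1) x (is @ [c]) * Q x c) - lam * L r x is"
    and eq_bot: "\<And>x i. x \<in> U \<Longrightarrow>
        pd (\<lambda>y. \<Sum>c\<in>UNIV. L 1 y [c] * Q y c) i x =
          2 * lam * (\<Sum>c\<in>UNIV. L 2 x [i, c] * Q x c) - lam^2 * L 1 x [i]"
    and J: "is_interval J"
    and sol: "is_solution g Q U J q v"
    and s: "s \<in> J" and t: "t \<in> J"
  shows "(let Ie = (\<lambda>\<tau>. exp (lam * \<tau>) / lam *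
              (- contr m (symcov g (L (m - 1)) (q \<tau>)) (v \<tau>)
               + lam * (\<Sum>r=1..m-1. contr r (L r (q \<tau>)) (v \<tau>))
               + (\<Sum>c\<in>UNIV. L 1 (q \<tau>) [c] * Q (q \<tau>) c)))
         in Ie s = Ie t)"
proof -
  obtain N where M: "m = N + 3" using m3 by (metis add.commute le_iff_add)
  have msuc: "Suc (m - 1) = m" using m3 by simp
  define K where "K = symcov g (L (m - 1))"
  define A where "A \<tau> = - contr m (K (q \<tau>)) (v \<tau>) + lam * (\<Sum>r=1..m-1. contr r (L r (q \<tau>)) (v \<tau>))
      + (\<Sum>c\<in>UNIV. L 1 (q \<tau>) [c] * Q (q \<tau>) c)" for \<tau>
  define Ie where "Ie \<tau> = exp (lam * \<tau>) / lam * A \<tau>" for \<tau>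
  have Kkill: "killing_tensor g U m K" using killing K_def by simp
  have key: "(Ie has_real_derivative 0) (at \<tau>)" if \<tau>J: "\<tau> \<in> J" for \<tau>
  proof -
    define x where "x = q \<tau>"
    define w where "w = v \<tau>"
    have xU: "x \<in> U" using sol \<tau>J unfolding is_solution_def x_def by blast
    have qd: "(q has_vector_derivative v \<tau>) (at \<tau>)" using sol \<tau>J unfolding is_solution_def by blast
    have vd: "(v has_vector_derivative (\<chi> a. - (\<Sum>b\<in>UNIV. \<Sum>c\<in>UNIV. christoffel g (q \<tau>) a b c * v \<tau> $ b * v \<tau> $ c) - Q (q \<tau>) a)) (at \<tau>)"
      using sol \<tau>J unfolding is_solution_def by blast
    define S where "S r = contr (Suc r) (symcov g (L r) x) w" for r
    define C where "C r = contr r (L r x) w" for r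
    define LQ where "LQ r = contr (r - 1) (\<lambda>is. \<Sum>c\<in>UNIV. L r x (is @ [c]) * Q x c) w" for r
    define KQ where "KQ = contr (m - 1) (\<lambda>is. \<Sum>c\<in>UNIV. K x (is @ [c]) * Q x c) w"
    define f where "f y = (\<Sum>c\<in>UNIV. L 1 y [c] * Q y c)" for y
    define Bd where "Bd = (\<Sum>j\<in>UNIV. w $ j * pd f j x)"
    define A' where "A' = - (0 - real m * KQ) + lam * (\<Sum>r=1..m-1. S r - real r * LQ r) + Bd"
    have TdK: "(\<lambda>y. K y is) differentiable (at (q \<tau>))" for "is"
      unfolding K_def x_def[symmetric]
      apply (rule symcov_diff[where U=U])
          apply (rule U_open)
         apply (rule g_smooth)
        apply (erule g_nondeg)
       apply (rule xU)
      apply (rule L_smooth)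
      using m3 by auto
    have symK: "K (q \<tau>) js = K (q \<tau>) is" if "length is = Suc (m - 1)" "mset js = mset is" for "is" js
    proof -
      have "totally_symmetric U m K" using Kkill unfolding killing_tensor_def by blast
      then have "\<forall>is js. length is = m \<longrightarrow> mset js = mset is \<longrightarrow> K (q \<tau>) js = K (q \<tau>) is"
        using xU unfolding totally_symmetric_def x_def by blast
      then show ?thesis using that msuc by metis
    qed
    have kill0: "contr (Suc m) (symcov g K x) w = 0"
    proof -
      have kk: "\<forall>is. length is = m + 1 \<longrightarrow> symcov g K x is = 0"
        using Kkill xU unfolding killing_tensor_def by blast
      show ?thesis by (rule contr_zero_fun) (use kk in simp)
    qed
    have dK: "((\<lambda>\<tau>. contr m (K (q \<tau>)) (v \<tau>)) has_real_derivative 0 - real m * KQ) (at \<tau>)"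
      using field_deriv[where T=K and r="m - 1" and g=g and Q=Q and q=q and v=v and t=\<tau>, OF qd vd TdK symK] unfolding msuc kill0[unfolded x_def w_def]
      by (simp add: KQ_def x_def w_def)
    have dL: "((\<lambda>\<tau>. contr r (L r (q \<tau>)) (v \<tau>)) has_real_derivative S r - real r * LQ r) (at \<tau>)"
      if r: "r \<in> {1..m-1}" for r
    proof -
      obtain r' where r': "r = Suc r'" using r by (metis atLeastAtMost_iff not0_implies_Suc not_one_le_zero)
      have r1: "1 \<le> r" "r \<le> m - 1" using r by auto
      have Td: "(\<lambda>y. L r y is) differentiable (at (q \<tau>))" for "is"
        using smooth_diff[OF L_smooth[OF r1] xU] unfolding x_def by blast
      have sy: "L r (q \<tau>) js = L r (q \<tau>) is" if "length is = Suc r'" "mset js = mset is" for "is" js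
      proof -
        have "totally_symmetric U r (L r)" using L_sym[OF r1] .
        then show ?thesis using xU that r' unfolding totally_symmetric_def x_def by blast
      qed
      note h = field_deriv[where T="L r" and r=r' and g=g and Q=Q and q=q and v=v and t=\<tau>, OF qd vd Td sy]
      show ?thesis using h unfolding S_def LQ_def x_def w_def r' by simp
    qed
    have dB: "((\<lambda>\<tau>. f (q \<tau>)) has_real_derivative Bd) (at \<tau>)"
    proof -
      have "f differentiable (at (q \<tau>))"
        unfolding f_def x_def[symmetric]
        by (intro differentiable_sum differentiable_mult ballI finite smooth_diff[OF Q_smooth xU]
            smooth_diff[OF L_smooth xU]) (use m3 in auto)
      then show ?thesis using chain_real[OF _ qd] unfolding Bd_def x_def w_def by blast
    qed
    have dA: "(A has_real_derivative A') (at \<tau>)"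
      unfolding A_def[abs_def] A'_def
      apply (rule DERIV_add[OF DERIV_add[OF DERIV_minus[OF dK] DERIV_cmult[OF DERIV_sum[OF dL]]]])
       apply assumption
      using dB unfolding f_def by simp
    have top: "S (m - 2) = - (real m / lam) * KQ - lam * C (m - 1)"
    proof -
      have e: "Suc (m - 2) = m - 1" using m3 by simp
      have "S (m - 2) = - (real m / lam) * contr (m - 1) (\<lambda>is. \<Sum>c\<in>UNIV. K x (is @ [c]) * Q x c) w
             + (- lam) * contr (m - 1) (L (m - 1) x) w"
        unfolding S_def e
        by (rule contr_lin) (simp add: eq_top[OF xU] K_def)
      then show ?thesis by (simp add: KQ_def C_def)
    qed
    have mid: "S (r - 1) = real (r + 1) * LQ (r + 1) - lam * C r" if "2 \<le> r" "r \<le> m - 2" for r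
    proof -
      have e: "Suc (r - 1) = r" using that by simp
      have "S (r - 1) = real (r + 1) * contr r (\<lambda>is. \<Sum>c\<in>UNIV. L (r + 1) x (is @ [c]) * Q x c) w
             + (- lam) * contr r (L r x) w"
        unfolding S_def e
        apply (rule contr_lin)
        apply (subst eq_mid[OF that xU], assumption)
        by simp
      then show ?thesis by (simp add: LQ_def C_def)
    qed
    have bot: "Bd = 2 * lam * LQ 2 - lam^2 * C 1"
    proof -
      have "Bd = (\<Sum>j\<in>UNIV. w $ j * (2 * lam * (\<Sum>c\<in>UNIV. L 2 x [j, c] * Q x c) - lam^2 * L 1 x [j]))"
        unfolding Bd_def f_def using eq_bot[OF xU] by simp
      also have "\<dots> = 2 * lam * (\<Sum>j\<in>UNIV. (\<Sum>c\<in>UNIV. L 2 x [j, c] * Q x c) * w $ j)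
          - lam^2 * (\<Sum>j\<in>UNIV. L 1 x [j] * w $ j)"
        by (simp add: algebra_simps sum_distrib_left sum_subtractf)
      finally show ?thesis unfolding LQ_def C_def numeral_2_eq_2 One_nat_def by (simp add: contr_1)
    qed
    have lq1: "LQ 1 = f x" unfolding LQ_def f_def by (simp add: contr_0)
    have AS: "A \<tau> = - S (m - 1) + lam * (\<Sum>r=1..m-1. C r) + f x"
      unfolding A_def S_def C_def msuc K_def x_def w_def f_def by simp
    have alg: "lam * A \<tau> + A' = 0"
      unfolding AS A'_def by (rule final_algebra[OF M lam top mid bot lq1])
    have dE: "((\<lambda>\<tau>. exp (lam * \<tau>) / lam) has_real_derivative exp (lam * \<tau>)) (at \<tau>)"
    proof -
      have "((\<lambda>\<tau>. exp (lam * \<tau>)) has_real_derivative exp (lam * \<tau>) * (lam * 1)) (at \<tau>)"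
        by (intro DERIV_exp[THEN DERIV_chain2] DERIV_cmult DERIV_ident)
      from DERIV_cdivide[OF this, of lam] show ?thesis using lam by simp
    qed
    have "(Ie has_real_derivative exp (lam * \<tau>) * A \<tau> + exp (lam * \<tau>) / lam * A') (at \<tau>)"
    proof -
      have ie: "Ie = (\<lambda>\<tau>. exp (lam * \<tau>) / lam * A \<tau>)" by (simp add: Ie_def fun_eq_iff)
      show ?thesis unfolding ie by (rule DERIV_cong[OF DERIV_mult[OF dE dA]]) simp
    qed
    moreover have "exp (lam * \<tau>) * A \<tau> + exp (lam * \<tau>) / lam * A' = exp (lam * \<tau>) / lam * (lam * A \<tau> + A')"
      using lam by (simp add: field_simps)
    ultimately show ?thesis using alg by simp
  qed
  have cJ: "convex J" using J is_interval_convex by blast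
  obtain c where "\<forall>x\<in>J. Ie x = c"
    using has_field_derivative_zero_constant[OF cJ, of Ie] key has_field_derivative_at_within by blast
  then have "Ie s = Ie t" using s t by simp
  then show ?thesis unfolding Ie_def A_def K_def Let_def by simp
qed


end
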